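(* Let $(\Omega,\mathcal{F})$ be a measurable space and $\mu$ a continuous capacity on $\mathcal{F}$. Let $\{Y_n\}_{n\in\mathbb{N}}$ be real-valued random variables on $(\Omega,\mathcal{F})$ such that for every $n\in\mathbb{N}$ the $\sigma$-algebras $\sigma(Y_k,\ k\le n)$ and $\sigma(Y_k,\ k\ge n+1)$ are independent with respect to $\mu$. Let $\mathcal{T}=\bigcap_{n=1}^{\infty}\sigma(Y_k,\ k\ge n)$ be the tail $\sigma$-algebra. Then for every $A\in\mathcal{T}$: (i) $\mu(A)=0$ or $\mu(A)=1$; and (ii) $\mu(A)=0$ or $\mu(A^c)=0$.
   Context: A capacity on $\mathcal{F}$ is a set function $\mu:\mathcal{F}\to[0,1]$ with $\mu(\emptyset)=0$, $\mu(\Omega)=1$ and $\mu(A)\le\mu(B)$ whenever $A\subseteq B$. It is continuous from below if $\mu(A_n)\to\mu(A)$ whenever $A_n\uparrow A$, continuous from above if $\mu(A_n)\to\mu(A)$ whenever $A_n\downarrow A$, and continuous if both hold. Two subclasses $\mathcal{D}_1,\mathcal{D}_2\subseteq\mathcal{F}$ are independent with respect to $\mu$ if $\mu(A_1\cap A_2)=\mu(A_1)\mu(A_2)$ for all $A_1\in\mathcal{D}_1$, $A_2\in\mathcal{D}_2$. *)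

theory Defs
  imports "HOL-Analysis.Analysis"
begin

definition capacity :: "'a measure \<Rightarrow> ('a set \<Rightarrow> real) \<Rightarrow> bool" where
  "capacity M \<mu> \<longleftrightarrow>
     (\<forall>A\<in>sets M. 0 \<le> \<mu> A \<and> \<mu> A \<le> 1) \<and>
     \<mu> {} = 0 \<and> \<mu> (space M) = 1 \<and>
     (\<forall>A\<in>sets M. \<forall>B\<in>sets M. A \<subseteq> B \<longrightarrow> \<mu> A \<le> \<mu> B)"

definition cont_below :: "'a measure \<Rightarrow> ('a set \<Rightarrow> real) \<Rightarrow> bool" where
  "cont_below M \<mu> \<longleftrightarrow>
     (\<forall>A :: nat \<Rightarrow> 'a set. range A \<subseteq> sets M \<longrightarrow> incseq A \<longrightarrow>
        (\<lambda>n. \<mu> (A n)) \<longlonglongrightarrow> \<mu> (\<Union>n. A n))"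

definition cont_above :: "'a measure \<Rightarrow> ('a set \<Rightarrow> real) \<Rightarrow> bool" where
  "cont_above M \<mu> \<longleftrightarrow>
     (\<forall>A :: nat \<Rightarrow> 'a set. range A \<subseteq> sets M \<longrightarrow> decseq A \<longrightarrow>
        (\<lambda>n. \<mu> (A n)) \<longlonglongrightarrow> \<mu> (\<Inter>n. A n))"

definition continuous_capacity :: "'a measure \<Rightarrow> ('a set \<Rightarrow> real) \<Rightarrow> bool" where
  "continuous_capacity M \<mu> \<longleftrightarrow> capacity M \<mu> \<and> cont_below M \<mu> \<and> cont_above M \<mu>"

definition cap_indep :: "('a set \<Rightarrow> real) \<Rightarrow> 'a set set \<Rightarrow> 'a set set \<Rightarrow> bool" where
  "cap_indep \<mu> D1 D2 \<longleftrightarrow> (\<forall>A1\<in>D1. \<forall>A2\<in>D2. \<mu> (A1 \<inter> A2) = \<mu> A1 * \<mu> A2)"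

definition gen_sigma :: "'a measure \<Rightarrow> (nat \<Rightarrow> 'a \<Rightarrow> real) \<Rightarrow> nat set \<Rightarrow> 'a set set" where
  "gen_sigma M Y K = sigma_sets (space M)
      (\<Union>k\<in>K. {Y k -` B \<inter> space M | B. B \<in> sets borel})"

definition tail_sigma :: "'a measure \<Rightarrow> (nat \<Rightarrow> 'a \<Rightarrow> real) \<Rightarrow> 'a set set" where
  "tail_sigma M Y = (\<Inter>n. gen_sigma M Y {n..})"

end

theory Submission
  imports Defs
begin

inductive_set mcl :: "'a set \<Rightarrow> 'a set set \<Rightarrow> 'a set set" for \<Omega> U where
  Basic: "a \<in> U \<Longrightarrow> a \<in> mcl \<Omega> U"
| Inc: "(\<And>i. A i \<in> mcl \<Omega> U) \<Longrightarrow> incseq (A :: nat \<Rightarrow> _) \<Longrightarrow> (\<Union>i. A i) \<in> mcl \<Omega> U"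
| Dec: "(\<And>i. A i \<in> mcl \<Omega> U) \<Longrightarrow> decseq (A :: nat \<Rightarrow> _) \<Longrightarrow> (\<Inter>i. A i) \<in> mcl \<Omega> U"

lemma mcl_compl:
  assumes "algebra \<Omega> U" "b \<in> mcl \<Omega> U"
  shows "\<Omega> - b \<in> mcl \<Omega> U"
  using assms(2)
proof induct
  case (Basic a) then show ?case using assms(1) by (simp add: algebra.compl_sets mcl.Basic)
next
  case (Inc A)
  have "\<Omega> - (\<Union>i. A i) = (\<Inter>i. \<Omega> - A i)" by auto
  moreover have "decseq (\<lambda>i. \<Omega> - A i)" using Inc(3) by (auto simp: incseq_def decseq_def)
  ultimately show ?case using Inc(2) by (metis mcl.Dec)
next
  case (Dec A)
  have "\<Omega> - (\<Inter>i. A i) = (\<Union>i. \<Omega> - A i)" by auto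
  moreover have "incseq (\<lambda>i. \<Omega> - A i)" using Dec(3) by (auto simp: incseq_def decseq_def)
  ultimately show ?case using Dec(2) by (metis mcl.Inc)
qed

lemma mcl_Un1:
  assumes "algebra \<Omega> U" "a \<in> U" "b \<in> mcl \<Omega> U"
  shows "a \<union> b \<in> mcl \<Omega> U"
  using assms(3)
proof induct
  case (Basic c) then show ?case using assms by (auto simp: algebra_iff_Un intro: mcl.Basic)
next
  case (Inc A)
  have "a \<union> (\<Union>i. A i) = (\<Union>i. a \<union> A i)" by auto
  moreover have "incseq (\<lambda>i. a \<union> A i)" using Inc(3) by (auto simp: incseq_def)
  ultimately show ?case using Inc(2) by (metis mcl.Inc)
next
  case (Dec A)
  have "a \<union> (\<Inter>i. A i) = (\<Inter>i. a \<union> A i)" by auto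
  moreover have "decseq (\<lambda>i. a \<union> A i)" using Dec(3) by (auto simp: decseq_def)
  ultimately show ?case using Dec(2) by (metis mcl.Dec)
qed

lemma mcl_Un:
  assumes "algebra \<Omega> U" "a \<in> mcl \<Omega> U" "b \<in> mcl \<Omega> U"
  shows "a \<union> b \<in> mcl \<Omega> U"
  using assms(2)
proof induct
  case (Basic c) then show ?case using assms mcl_Un1 by blast
next
  case (Inc A)
  have "(\<Union>i. A i) \<union> b = (\<Union>i. A i \<union> b)" by auto
  moreover have "incseq (\<lambda>i. A i \<union> b)" using Inc(3) by (auto simp: incseq_def)
  ultimately show ?case using Inc(2) by (metis mcl.Inc)
next
  case (Dec A)
  have "(\<Inter>i. A i) \<union> b = (\<Inter>i. A i \<union> b)" by auto
  moreover have "decseq (\<lambda>i. A i \<union> b)" using Dec(3) by (auto simp: decseq_def)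
  ultimately show ?case using Dec(2) by (metis mcl.Dec)
qed

lemma mcl_UN:
  assumes "algebra \<Omega> U" "\<And>i. A i \<in> mcl \<Omega> U"
  shows "(\<Union>i::nat. A i) \<in> mcl \<Omega> U"
proof -
  have fin: "(\<Union>i\<le>n. A i) \<in> mcl \<Omega> U" for n
  proof (induct n)
    case 0 then show ?case using assms by simp
  next
    case (Suc n)
    have "(\<Union>i\<le>Suc n. A i) = (\<Union>i\<le>n. A i) \<union> A (Suc n)" by (auto simp: atMost_Suc)
    then show ?case using Suc assms mcl_Un by metis
  qed
  have "(\<Union>i. A i) = (\<Union>n. \<Union>i\<le>n. A i)" by auto
  moreover have "incseq (\<lambda>n. \<Union>i\<le>n. A i)" by (auto simp: incseq_def) (meson atMost_iff order_trans)
  ultimately show ?thesis using fin by (metis mcl.Inc)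
qed

lemma sigma_sets_mcl:
  assumes "algebra \<Omega> U"
  shows "sigma_sets \<Omega> U \<subseteq> mcl \<Omega> U"
proof
  fix x assume "x \<in> sigma_sets \<Omega> U"
  then show "x \<in> mcl \<Omega> U"
  proof induct
    case (Basic a) then show ?case by (rule mcl.Basic)
  next
    case Empty then show ?case using assms by (auto simp: algebra_iff_Un intro: mcl.Basic)
  next
    case (Compl a) then show ?case using assms mcl_compl by blast
  next
    case (Union a) then show ?case using assms mcl_UN by blast
  qed
qed

theorem theorem1:
  fixes M :: "'a measure" and \<mu> :: "'a set \<Rightarrow> real" and Y :: "nat \<Rightarrow> 'a \<Rightarrow> real"
  assumes "continuous_capacity M \<mu>"
    and "\<And>n. Y n \<in> borel_measurable M"
    and "\<And>n. cap_indep \<mu> (gen_sigma M Y {..n}) (gen_sigma M Y {n+1..})"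
    and "A \<in> tail_sigma M Y"
  shows "(\<mu> A = 0 \<or> \<mu> A = 1) \<and> (\<mu> A = 0 \<or> \<mu> (space M - A) = 0)"
proof -
  define G where "G K = (\<Union>k\<in>K. {Y k -` B \<inter> space M | B. B \<in> sets borel})" for K
  have genM: "G K \<subseteq> sets M" for K
    using assms(2) unfolding G_def by (auto simp: measurable_sets)
  have gsM: "gen_sigma M Y K \<subseteq> sets M" for K
    unfolding gen_sigma_def G_def[symmetric] using genM sets.sigma_sets_subset by blast
  have gmono: "K \<subseteq> L \<Longrightarrow> gen_sigma M Y K \<subseteq> gen_sigma M Y L" for K L
    unfolding gen_sigma_def G_def[symmetric]
    by (rule sigma_sets_subseteq) (auto simp: G_def)
  define U where "U = (\<Union>n. gen_sigma M Y {..n})"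
  have sa: "sigma_algebra (space M) (gen_sigma M Y K)" for K
    unfolding gen_sigma_def G_def[symmetric]
    by (rule sigma_algebra_sigma_sets) (use genM sets.sets_into_space in blast)
  have alg: "algebra (space M) U"
    unfolding algebra_iff_Un
  proof (intro conjI ballI)
    show "U \<subseteq> Pow (space M)" unfolding U_def using gsM sets.sets_into_space by blast
    show "{} \<in> U" unfolding U_def using sigma_sets.Empty unfolding gen_sigma_def by blast
  next
    fix a assume "a \<in> U"
    then obtain n where "a \<in> gen_sigma M Y {..n}" unfolding U_def by blast
    then have "space M - a \<in> gen_sigma M Y {..n}" unfolding gen_sigma_def by (rule sigma_sets.Compl)
    then show "space M - a \<in> U" unfolding U_def by blast
  next
    fix a b assume "a \<in> U" "b \<in> U"
    then obtain n m where "a \<in> gen_sigma M Y {..n}" "b \<in> gen_sigma M Y {..m}" unfolding U_def by blast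
    then have "a \<in> gen_sigma M Y {..max n m}" "b \<in> gen_sigma M Y {..max n m}"
      using gmono[of "{..n}" "{..max n m}"] gmono[of "{..m}" "{..max n m}"] by auto
    then have "a \<union> b \<in> gen_sigma M Y {..max n m}" unfolding gen_sigma_def by (rule sigma_sets_Un)
    then show "a \<union> b \<in> U" unfolding U_def by blast
  qed
  have Atail: "A \<in> gen_sigma M Y {n..}" for n using assms(4) unfolding tail_sigma_def by blast
  have AM: "A \<in> sets M" using Atail gsM by blast
  have AsU: "A \<in> sigma_sets (space M) U"
  proof -
    have "G {0..} \<subseteq> U"
    proof
      fix x assume "x \<in> G {0..}"
      then obtain k where "x \<in> G {k}" unfolding G_def by blast
      then have "x \<in> gen_sigma M Y {..k}" unfolding gen_sigma_def G_def[symmetric]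
        using G_def by (auto intro: sigma_sets.Basic)
      then show "x \<in> U" unfolding U_def by blast
    qed
    then have "sigma_sets (space M) (G {0..}) \<subseteq> sigma_sets (space M) U"
      by (rule sigma_sets_subseteq)
    then show ?thesis using Atail[of 0] unfolding gen_sigma_def G_def[symmetric] by blast
  qed
  have cap: "capacity M \<mu>" and cb: "cont_below M \<mu>" and ca: "cont_above M \<mu>"
    using assms(1) unfolding continuous_capacity_def by auto
  have UM: "U \<subseteq> sets M" unfolding U_def using gsM by blast
  have P: "B \<in> sets M \<and> \<mu> (B \<inter> A) = \<mu> B * \<mu> A" if "B \<in> mcl (space M) U" for B
    using that
  proof induct
    case (Basic a)
    then obtain n where an: "a \<in> gen_sigma M Y {..n}" unfolding U_def by blast
    have "\<mu> (a \<inter> A) = \<mu> a * \<mu> A" using assms(3)[of n] Atail[of "n+1"] an unfolding cap_indep_def by blast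
    then show ?case using UM Basic by blast
  next
    case (Inc B)
    have BM: "range B \<subseteq> sets M" using Inc by auto
    have r2: "range (\<lambda>i. B i \<inter> A) \<subseteq> sets M" using BM AM by auto
    have "incseq (\<lambda>i. B i \<inter> A)" using Inc(3) by (auto simp: incseq_def)
    then have "(\<lambda>i. \<mu> (B i \<inter> A)) \<longlonglongrightarrow> \<mu> (\<Union>i. B i \<inter> A)"
      using cb r2 unfolding cont_below_def by (elim allE impE) (assumption+)
    moreover have "(\<lambda>i. \<mu> (B i) * \<mu> A) \<longlonglongrightarrow> \<mu> (\<Union>i. B i) * \<mu> A"
      using cb BM Inc(3) unfolding cont_below_def by (intro tendsto_mult tendsto_const) (elim allE impE; assumption)
    moreover have "(\<lambda>i. \<mu> (B i \<inter> A)) = (\<lambda>i. \<mu> (B i) * \<mu> A)" using Inc(2) by auto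
    moreover have "(\<Union>i. B i \<inter> A) = (\<Union>i. B i) \<inter> A" by auto
    ultimately have "\<mu> ((\<Union>i. B i) \<inter> A) = \<mu> (\<Union>i. B i) * \<mu> A"
      by (metis (no_types) LIMSEQ_unique)
    then show ?case using BM by auto
  next
    case (Dec B)
    have BM: "range B \<subseteq> sets M" using Dec by auto
    have r2: "range (\<lambda>i. B i \<inter> A) \<subseteq> sets M" using BM AM by auto
    have "decseq (\<lambda>i. B i \<inter> A)" using Dec(3) by (auto simp: decseq_def)
    then have "(\<lambda>i. \<mu> (B i \<inter> A)) \<longlonglongrightarrow> \<mu> (\<Inter>i. B i \<inter> A)"
      using ca r2 unfolding cont_above_def by (elim allE impE) (assumption+)
    moreover have "(\<lambda>i. \<mu> (B i) * \<mu> A) \<longlonglongrightarrow> \<mu> (\<Inter>i. B i) * \<mu> A"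
      using ca BM Dec(3) unfolding cont_above_def by (intro tendsto_mult tendsto_const) (elim allE impE; assumption)
    moreover have "(\<lambda>i. \<mu> (B i \<inter> A)) = (\<lambda>i. \<mu> (B i) * \<mu> A)" using Dec(2) by auto
    moreover have "(\<Inter>i. B i \<inter> A) = (\<Inter>i. B i) \<inter> A" by auto
    ultimately have "\<mu> ((\<Inter>i. B i) \<inter> A) = \<mu> (\<Inter>i. B i) * \<mu> A"
      by (metis (no_types) LIMSEQ_unique)
    then show ?case using BM by (auto intro: sets.countable_INT)
  qed
  have AA: "A \<in> mcl (space M) U" using AsU sigma_sets_mcl[OF alg] by blast
  have cA: "space M - A \<in> mcl (space M) U"
    using AsU sigma_sets_mcl[OF alg] sigma_sets.Compl by blast
  have "\<mu> A = \<mu> A * \<mu> A" using P[OF AA] by simp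
  then have 1: "\<mu> A = 0 \<or> \<mu> A = 1"
    by (smt (verit) mult_cancel_left1 mult_zero_left)
  have "(space M - A) \<inter> A = {}" by auto
  then have "0 = \<mu> (space M - A) * \<mu> A" using P[OF cA] cap unfolding capacity_def by simp
  then have 2: "\<mu> A = 0 \<or> \<mu> (space M - A) = 0" by auto
  show ?thesis using 1 2 by blast
qed

end
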